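(* Let $IS\in\{\Box,\blacksquare\}^2$ and let $\tau$ be a correct compositional translation from $\mathrm{SYNCSIMPLE}$ into $\mathrm{LOCKSIMPLE}_{2,IS}$. Then $\tau$ does not have blocking type $(P_1P_1,P_1)$, nor $(P_1,P_1P_1)$, nor $(P_1,P_1)$.
   Context: $\mathrm{SYNCSIMPLE}$: subprocesses $\mathcal{U} ::= \checkmark \mid 0 \mid\, !\mathcal{U} \mid\, ?\mathcal{U}$; processes are finite parallel compositions ($\mid$ associative, commutative, $0$ a unit). Reduction: $!\mathcal{U}_1\mid ?\mathcal{U}_2\mid \mathcal{P}\to \mathcal{U}_1\mid\mathcal{U}_2\mid\mathcal{P}$. Successful: of form $\checkmark\mid\mathcal{P}$; may-convergent: reduces to a successful process; must-convergent: every reachable process is may-convergent. $\mathrm{LOCKSIMPLE}_{k,IS}$ ($IS\in\{\Box,\blacksquare\}^k$, $\Box$ empty, $\blacksquare$ full): subprocesses are words over $\{P_1,T_1,\dots,P_k,T_k\}$ followed by $0$ or $\checkmark$; states $(\mathcal{P},C)$ reduce by $(P_i\mathcal{U}\mid\mathcal{P},C)\to(\mathcal{U}\mid\mathcal{P},C[C_i:=\blacksquare])$ only if $C_i=\Box$, and $(T_i\mathcal{U}\mid\mathcal{P},C)\to(\mathcal{U}\mid\mathcal{P},C[C_i:=\Box])$ always. Success = process contains $\checkmark$; a process $\mathcal{P}$ is may/must-convergent iff the state $(\mathcal{P},IS)$ is. A compositional translation $\tau$ is given by words $\tau(!),\tau(?)$ with $\tau(0)=0$, $\tau(\checkmark)=\checkmark$,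 $\tau(!\mathcal{U})=\tau(!)\tau(\mathcal{U})$, $\tau(?\mathcal{U})=\tau(?)\tau(\mathcal{U})$, $\tau$ commuting with $\mid$; correct = preserves and reflects may- and must-convergence. Blocking type: for a word $S$, run $S$ as a single subprocess from $IS$; if it gets stuck at an occurrence of $P_i$, that occurrence ends the blocking prefix; if it is the first symbol from $\{P_i,T_i\}$ in $S$ the blocking type is $P_i$, otherwise the blocking prefix has form $R_1P_iR_2P_i$ with $R_2$ containing no $P_i,T_i$, and the blocking type is $P_iP_i$. $\tau$ has blocking type $(W_1,W_2)$ if $\tau(!)$ has type $W_1$ and $\tau(?)$ type $W_2$. *)

theory Defs
  imports "HOL-Library.Multiset"
begin

datatype sub = Check | Zero | Snd sub | Rcv sub

type_synonym sproc = "sub multiset"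

inductive sync_step :: "sproc \<Rightarrow> sproc \<Rightarrow> bool" where
  "sync_step ({#Snd u1, Rcv u2#} + P) ({#u1, u2#} + P)"

definition sync_successful :: "sproc \<Rightarrow> bool" where
  "sync_successful P \<longleftrightarrow> Check \<in># P"

definition sync_may :: "sproc \<Rightarrow> bool" where
  "sync_may P \<longleftrightarrow> (\<exists>Q. sync_step\<^sup>*\<^sup>* P Q \<and> sync_successful Q)"

definition sync_must :: "sproc \<Rightarrow> bool" where
  "sync_must P \<longleftrightarrow> (\<forall>Q. sync_step\<^sup>*\<^sup>* P Q \<longrightarrow> sync_may Q)"

datatype lsym = P nat | T nat

text \<open>A subprocess is a word followed by 0 (False) or the success symbol (True).
  Lock contents: True = full, False = empty.\<close>
type_synonym lsub = "lsym list \<times> bool"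
type_synonym lproc = "lsub multiset"
type_synonym locks = "nat \<Rightarrow> bool"

inductive lock_step :: "lproc \<times> locks \<Rightarrow> lproc \<times> locks \<Rightarrow> bool" where
  lock_P: "\<not> C i \<Longrightarrow> lock_step ({#(P i # w, e)#} + Q, C) ({#(w, e)#} + Q, C(i := True))"
| lock_T: "lock_step ({#(T i # w, e)#} + Q, C) ({#(w, e)#} + Q, C(i := False))"

definition lock_successful :: "lproc \<times> locks \<Rightarrow> bool" where
  "lock_successful S \<longleftrightarrow> ([], True) \<in># fst S"

definition lock_may :: "lproc \<times> locks \<Rightarrow> bool" where
  "lock_may S \<longleftrightarrow> (\<exists>S'. lock_step\<^sup>*\<^sup>* S S' \<and> lock_successful S')"

definition lock_must :: "lproc \<times> locks \<Rightarrow> bool" where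
  "lock_must S \<longleftrightarrow> (\<forall>S'. lock_step\<^sup>*\<^sup>* S S' \<longrightarrow> lock_may S')"

fun tr_sub :: "lsym list \<Rightarrow> lsym list \<Rightarrow> sub \<Rightarrow> lsub" where
  "tr_sub ts tr Check = ([], True)"
| "tr_sub ts tr Zero = ([], False)"
| "tr_sub ts tr (Snd u) = (ts @ fst (tr_sub ts tr u), snd (tr_sub ts tr u))"
| "tr_sub ts tr (Rcv u) = (tr @ fst (tr_sub ts tr u), snd (tr_sub ts tr u))"

definition tr_proc :: "lsym list \<Rightarrow> lsym list \<Rightarrow> sproc \<Rightarrow> lproc" where
  "tr_proc ts tr Pr = image_mset (tr_sub ts tr) Pr"

text \<open>Correct translation (given by the words ts = tau(!), tr = tau(?)) into
  LOCKSIMPLE with initial lock state IS.\<close>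
definition correct_translation :: "locks \<Rightarrow> lsym list \<Rightarrow> lsym list \<Rightarrow> bool" where
  "correct_translation IS ts tr \<longleftrightarrow>
     (\<forall>Pr. (sync_may Pr \<longleftrightarrow> lock_may (tr_proc ts tr Pr, IS)) \<and>
           (sync_must Pr \<longleftrightarrow> lock_must (tr_proc ts tr Pr, IS)))"

datatype btype = BP nat | BPP nat

text \<open>Run a word as a single subprocess; returns the position and the lock index
  of the P-occurrence where it gets stuck, if any.\<close>
fun run_stuck :: "locks \<Rightarrow> lsym list \<Rightarrow> (nat \<times> nat) option" where
  "run_stuck C [] = None"
| "run_stuck C (P i # w) = (if C i then Some (0, i)
      else map_option (\<lambda>(n, j). (Suc n, j)) (run_stuck (C(i := True)) w))"
| "run_stuck C (T i # w) = map_option (\<lambda>(n, j). (Suc n, j)) (run_stuck (C(i := False)) w)"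

definition blocking_type :: "locks \<Rightarrow> lsym list \<Rightarrow> btype option" where
  "blocking_type IS S = (case run_stuck IS S of
      None \<Rightarrow> None
    | Some (n, i) \<Rightarrow> Some (if (\<forall>m<n. S ! m \<noteq> P i \<and> S ! m \<noteq> T i) then BP i else BPP i))"

end

theory Submission
  imports Defs
begin

lemma run_stuck_sem:
  "run_stuck C w = Some (n, i) \<Longrightarrow> \<exists>C'. n < length w \<and> w ! n = P i \<and> C' i \<and>
     (\<forall>Q e. lock_step\<^sup>*\<^sup>* ({#(w,e)#}+Q, C) ({#(drop n w, e)#}+Q, C')) \<and>
     (\<forall>j. (\<forall>m<n. w!m \<noteq> P j \<and> w!m \<noteq> T j) \<longrightarrow> C' j = C j)"
proof (induction w arbitrary: C n)
  case Nil
  then show ?case by simp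
next
  case (Cons x w)
  show ?case
  proof (cases x)
    case (P k)
    show ?thesis
    proof (cases "C k")
      case True
      then show ?thesis using Cons.prems P by (auto intro!: exI[of _ C])
    next
      case False
      with Cons.prems P obtain n' where n': "n = Suc n'" "run_stuck (C(k := True)) w = Some (n', i)"
        by auto
      from Cons.IH[OF n'(2)] obtain C' where C': "n' < length w" "w ! n' = P i" "C' i"
        "\<forall>Q e. lock_step\<^sup>*\<^sup>* ({#(w,e)#}+Q, C(k:=True)) ({#(drop n' w, e)#}+Q, C')"
        "\<forall>j. (\<forall>m<n'. w!m \<noteq> P j \<and> w!m \<noteq> T j) \<longrightarrow> C' j = (C(k:=True)) j" by blast
      show ?thesis
      proof (intro exI[of _ C'] conjI allI impI)
        fix Q e
        have "lock_step ({#(x#w,e)#}+Q, C) ({#(w,e)#}+Q, C(k:=True))"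
          using P False lock_step.lock_P[of C k w e Q] by simp
        then show "lock_step\<^sup>*\<^sup>* ({#(x # w, e)#} + Q, C) ({#(drop n (x # w), e)#} + Q, C')"
          using C'(4) n' by (simp add: converse_rtranclp_into_rtranclp)
      next
        fix j assume h: "\<forall>m<n. (x # w) ! m \<noteq> P j \<and> (x # w) ! m \<noteq> T j"
        then have "j \<noteq> k" using P n' by (metis nth_Cons_0 zero_less_Suc)
        moreover have "\<forall>m<n'. w!m \<noteq> P j \<and> w!m \<noteq> T j" using h n' by (metis Suc_mono nth_Cons_Suc)
        ultimately show "C' j = C j" using C'(5) by simp
      qed (use C' n' in auto)
    qed
  next
    case (T k)
    with Cons.prems obtain n' where n': "n = Suc n'" "run_stuck (C(k := False)) w = Some (n', i)"
      by auto
    from Cons.IH[OF n'(2)] obtain C' where C': "n' < length w" "w ! n' = P i" "C' i"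
      "\<forall>Q e. lock_step\<^sup>*\<^sup>* ({#(w,e)#}+Q, C(k:=False)) ({#(drop n' w, e)#}+Q, C')"
      "\<forall>j. (\<forall>m<n'. w!m \<noteq> P j \<and> w!m \<noteq> T j) \<longrightarrow> C' j = (C(k:=False)) j" by blast
    show ?thesis
    proof (intro exI[of _ C'] conjI allI impI)
      fix Q e
      have "lock_step ({#(x#w,e)#}+Q, C) ({#(w,e)#}+Q, C(k:=False))"
        using T lock_step.lock_T[of k w e Q C] by simp
      then show "lock_step\<^sup>*\<^sup>* ({#(x # w, e)#} + Q, C) ({#(drop n (x # w), e)#} + Q, C')"
        using C'(4) n' by (simp add: converse_rtranclp_into_rtranclp)
    next
      fix j assume h: "\<forall>m<n. (x # w) ! m \<noteq> P j \<and> (x # w) ! m \<noteq> T j"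
      then have "j \<noteq> k" using T n' by (metis nth_Cons_0 zero_less_Suc)
      moreover have "\<forall>m<n'. w!m \<noteq> P j \<and> w!m \<noteq> T j" using h n' by (metis Suc_mono nth_Cons_Suc)
      ultimately show "C' j = C j" using C'(5) by simp
    qed (use C' n' in auto)
  qed
qed

lemma lock_step_inv:
  "lock_step (M, C) (M', C') \<Longrightarrow> \<exists>x w e Q. M = add_mset (x#w,e) Q \<and> M' = add_mset (w,e) Q \<and>
     (case x of P i \<Rightarrow> \<not> C i \<and> C' = C(i:=True) | T i \<Rightarrow> C' = C(i:=False))"
  by (erule lock_step.cases; (rule exI)+; auto)

lemma two_eq:
  "add_mset X Q = {#A, B#} \<Longrightarrow> (X = A \<and> Q = {#B#}) \<or> (X = B \<and> Q = {#A#})"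
  by (metis add_eq_conv_ex add_mset_eq_single)

lemma no_success:
  fixes ts tr :: "lsym list"
  assumes ns: "ns < length ts" "ts!ns = P 1" "\<forall>m. a0 \<le> m \<and> m < ns \<longrightarrow> ts!m \<noteq> P 1 \<and> ts!m \<noteq> T 1"
    and nr: "nr < length tr" "tr!nr = P 1" "\<forall>m. b0 \<le> m \<and> m < nr \<longrightarrow> tr!m \<noteq> P 1 \<and> tr!m \<noteq> T 1"
    and st: "C0 1" "a0 \<le> ns" "b0 \<le> nr"
  shows "\<not> lock_may ({#(drop a0 ts, e1), (drop b0 tr, e2)#}, C0)"
proof -
  define Inv :: "lproc \<times> locks \<Rightarrow> bool" where "Inv S \<longleftrightarrow> (\<exists>a b C. S = ({#(drop a ts, e1), (drop b tr, e2)#}, C) \<and> C 1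
      \<and> a0 \<le> a \<and> a \<le> ns \<and> b0 \<le> b \<and> b \<le> nr)" for S
  have pres: "Inv S'" if "Inv S" "lock_step S S'" for S S'
  proof -
    from that(1) obtain a b C where S: "S = ({#(drop a ts, e1), (drop b tr, e2)#}, C)" "C 1"
      "a0 \<le> a" "a \<le> ns" "b0 \<le> b" "b \<le> nr" unfolding Inv_def by blast
    obtain M' C' where S': "S' = (M', C')" by (cases S')
    have ls: "lock_step ({#(drop a ts, e1), (drop b tr, e2)#}, C) (M', C')" using that(2) S(1) S' by simp
    obtain x w e Q where
      X: "{#(drop a ts, e1), (drop b tr, e2)#} = add_mset (x#w,e) Q" "M' = add_mset (w,e) Q"
      "case x of P i \<Rightarrow> \<not> C i \<and> C' = C(i:=True) | T i \<Rightarrow> C' = C(i:=False)"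
      using lock_step_inv[OF ls] by blast
    have C1: "C' 1" if "x \<noteq> P 1" "x \<noteq> T 1"
    proof (cases x)
      case (P k) then show ?thesis using X(3) S(2) that by simp
    next
      case (T k) then show ?thesis using X(3) S(2) that by simp
    qed
    from two_eq[OF X(1)[symmetric]] show ?thesis
    proof
      assume h: "(x # w, e) = (drop a ts, e1) \<and> Q = {#(drop b tr, e2)#}"
      have al: "a < length ts" using S(4) ns(1) by simp
      have d: "drop a ts = ts ! a # drop (Suc a) ts" using Cons_nth_drop_Suc[OF al] by simp
      have xa: "x = ts ! a" "w = drop (Suc a) ts" "e = e1" using h d by simp_all
      have "a \<noteq> ns"
      proof
        assume "a = ns" then have "x = P 1" using xa ns(2) by simp
        with X(3) S(2) show False by simp
      qed
      then have an: "a < ns" using S(4) by simp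
      then have "x \<noteq> P 1 \<and> x \<noteq> T 1" using ns(3)[rule_format, of a] S(3) xa(1) by simp
      then have "C' 1" using C1 by simp
      moreover have "M' = {#(drop (Suc a) ts, e1), (drop b tr, e2)#}" using X(2) h xa by simp
      ultimately show ?thesis unfolding Inv_def S' using an S(3-6)
        by (intro exI[of _ "Suc a"] exI[of _ b] exI[of _ C']) auto
    next
      assume h: "(x # w, e) = (drop b tr, e2) \<and> Q = {#(drop a ts, e1)#}"
      have al: "b < length tr" using S(6) nr(1) by simp
      have d: "drop b tr = tr ! b # drop (Suc b) tr" using Cons_nth_drop_Suc[OF al] by simp
      have xa: "x = tr ! b" "w = drop (Suc b) tr" "e = e2" using h d by simp_all
      have "b \<noteq> nr"
      proof
        assume "b = nr" then have "x = P 1" using xa nr(2) by simp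
        with X(3) S(2) show False by simp
      qed
      then have an: "b < nr" using S(6) by simp
      then have "x \<noteq> P 1 \<and> x \<noteq> T 1" using nr(3)[rule_format, of b] S(5) xa(1) by simp
      then have "C' 1" using C1 by simp
      moreover have "M' = {#(drop a ts, e1), (drop (Suc b) tr, e2)#}" using X(2) h xa
        by (simp add: add_mset_commute)
      ultimately show ?thesis unfolding Inv_def S' using an S(3-6)
        by (intro exI[of _ a] exI[of _ "Suc b"] exI[of _ C']) auto
    qed
  qed
  have reach: "Inv S'" if "lock_step\<^sup>*\<^sup>* ({#(drop a0 ts, e1), (drop b0 tr, e2)#}, C0) S'" for S'
    using that
  proof (induction rule: rtranclp_induct)
    case base
    show ?case unfolding Inv_def using st by blast
  next
    case (step y z)
    then show ?case using pres by blast
  qed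
  show ?thesis
  proof
    assume "lock_may ({#(drop a0 ts, e1), (drop b0 tr, e2)#}, C0)"
    then obtain S' where r: "lock_step\<^sup>*\<^sup>* ({#(drop a0 ts, e1), (drop b0 tr, e2)#}, C0) S'"
      and succ: "lock_successful S'" unfolding lock_may_def by blast
    from reach[OF r] obtain a b C where "S' = ({#(drop a ts, e1), (drop b tr, e2)#}, C)" "a \<le> ns" "b \<le> nr"
      unfolding Inv_def by blast
    then show False using ns(1) nr(1) succ unfolding lock_successful_def by auto
  qed
qed

lemma bt_BP:
  "blocking_type IS S = Some (BP 1) \<Longrightarrow> \<exists>n. run_stuck IS S = Some (n,1) \<and> (\<forall>m<n. S!m \<noteq> P 1 \<and> S!m \<noteq> T 1)"
  by (auto simp: blocking_type_def split: option.splits if_splits)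

lemma bt_BPP:
  "blocking_type IS S = Some (BPP 1) \<Longrightarrow> \<exists>n. run_stuck IS S = Some (n,1)"
  by (auto simp: blocking_type_def split: option.splits if_splits)

lemma sync_reach:
  assumes "sync_step\<^sup>*\<^sup>* {#Snd a, Rcv b#} Q" "a \<in> {Check, Zero}" "b \<in> {Check, Zero}"
  shows "Q = {#Snd a, Rcv b#} \<or> Q = {#a, b#}"
  using assms(1)
proof (induction rule: rtranclp_induct)
  case base
  then show ?case by simp
next
  case (step y z)
  from step.hyps(2) obtain u1 u2 R where yz: "y = {#Snd u1, Rcv u2#} + R" "z = {#u1, u2#} + R"
    by (cases rule: sync_step.cases) auto
  from step.IH show ?case
  proof
    assume y: "y = {#Snd a, Rcv b#}"
    then have "size R = 0" using yz(1) by (metis add_cancel_right_right size_eq_0_iff_empty size_union size_add_mset size_single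
        numeral_2_eq_2 add_mset_add_single add.commute) 
    then have R: "R = {#}" by simp
    have e: "{#Snd u1, Rcv u2#} = {#Snd a, Rcv b#}" using y yz(1) R by simp
    have "Snd u1 \<in># {#Snd a, Rcv b#}" using e[symmetric] by (metis union_single_eq_member add_mset_add_single)
    then have "u1 = a" by simp
    have "Rcv u2 \<in># {#Snd a, Rcv b#}" using e by (metis multiset_partition add_mset_commute union_single_eq_member add_mset_add_single)
    then have "u2 = b" by simp
    show ?thesis using yz(2) R \<open>u1 = a\<close> \<open>u2 = b\<close> by simp
  next
    assume y: "y = {#a, b#}"
    have "Snd u1 \<in># y" using yz(1) by simp
    then show ?thesis using y assms(2,3) by auto
  qed
qed

lemma sync_good:
  assumes "a \<in> {Check, Zero}" "b \<in> {Check, Zero}" "Check \<in> {a, b}"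
  shows "sync_may {#Snd a, Rcv b#}" "sync_must {#Snd a, Rcv b#}"
proof -
  have st: "sync_step {#Snd a, Rcv b#} {#a, b#}"
    using sync_step.intros[of a b "{#}"] by simp
  have m2: "sync_may {#a, b#}" unfolding sync_may_def sync_successful_def
    using assms(3) by (intro exI[of _ "{#a, b#}"]) auto
  show m1: "sync_may {#Snd a, Rcv b#}" unfolding sync_may_def sync_successful_def
    using st assms(3) by (intro exI[of _ "{#a, b#}"]) auto
  show "sync_must {#Snd a, Rcv b#}" unfolding sync_must_def
    using sync_reach[OF _ assms(1,2)] m1 m2 by blast
qed

theorem proposition5p10:
  fixes IS :: locks and ts tr :: "lsym list"
  assumes "set ts \<subseteq> {P 1, T 1, P 2, T 2}" and "set tr \<subseteq> {P 1, T 1, P 2, T 2}"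
    and "correct_translation IS ts tr"
  shows "\<not> (blocking_type IS ts = Some (BPP 1) \<and> blocking_type IS tr = Some (BP 1))
       \<and> \<not> (blocking_type IS ts = Some (BP 1) \<and> blocking_type IS tr = Some (BPP 1))
       \<and> \<not> (blocking_type IS ts = Some (BP 1) \<and> blocking_type IS tr = Some (BP 1))"
proof (intro conjI notI)
  have tp1: "tr_proc ts tr {#Snd Check, Rcv Zero#} = {#(ts, True), (tr, False)#}"
    by (simp add: tr_proc_def)
  have tp2: "tr_proc ts tr {#Snd Zero, Rcv Check#} = {#(ts, False), (tr, True)#}"
    by (simp add: tr_proc_def)
  have g1: "sync_may {#Snd Check, Rcv Zero#}" "sync_must {#Snd Check, Rcv Zero#}"
    using sync_good[of Check Zero] by auto
  have g2: "sync_may {#Snd Zero, Rcv Check#}" "sync_must {#Snd Zero, Rcv Check#}"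
    using sync_good[of Zero Check] by auto
  have ct: "(sync_may Pr \<longleftrightarrow> lock_may (tr_proc ts tr Pr, IS)) \<and>
      (sync_must Pr \<longleftrightarrow> lock_must (tr_proc ts tr Pr, IS))" for Pr
    using assms(3) unfolding correct_translation_def by blast
  have L1: "lock_may ({#(ts, True), (tr, False)#}, IS)" "lock_must ({#(ts, True), (tr, False)#}, IS)"
    using ct[of "{#Snd Check, Rcv Zero#}"] g1 tp1 by simp_all
  have L2: "lock_must ({#(ts, False), (tr, True)#}, IS)"
    using ct[of "{#Snd Zero, Rcv Check#}"] g2 tp2 by simp
  {
    assume h: "blocking_type IS ts = Some (BPP 1) \<and> blocking_type IS tr = Some (BP 1)"
    obtain ns where rs: "run_stuck IS ts = Some (ns, 1)" using bt_BPP h by blast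
    obtain nr where rr: "run_stuck IS tr = Some (nr, 1)" "\<forall>m<nr. tr!m \<noteq> P 1 \<and> tr!m \<noteq> T 1"
      using bt_BP h by blast
    obtain C' where C': "ns < length ts" "ts ! ns = P 1" "C' 1"
      "\<forall>Q e. lock_step\<^sup>*\<^sup>* ({#(ts,e)#}+Q, IS) ({#(drop ns ts, e)#}+Q, C')"
      using run_stuck_sem[OF rs] by blast
    obtain D where D: "nr < length tr" "tr ! nr = P 1" using run_stuck_sem[OF rr(1)] by blast
    have r: "lock_step\<^sup>*\<^sup>* ({#(ts, True), (tr, False)#}, IS) ({#(drop ns ts, True), (drop 0 tr, False)#}, C')"
      using C'(4)[rule_format, of True "{#(tr,False)#}"] by (simp add: add_mset_commute)
    have "\<not> lock_may ({#(drop ns ts, True), (drop 0 tr, False)#}, C')"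
      by (rule no_success[where nr = nr]) (use C' D rr in auto)
    then show False using L1(2) r unfolding lock_must_def by blast
  }
  {
    assume h: "blocking_type IS ts = Some (BP 1) \<and> blocking_type IS tr = Some (BPP 1)"
    obtain nr where rr: "run_stuck IS tr = Some (nr, 1)" using bt_BPP h by blast
    obtain ns where rs: "run_stuck IS ts = Some (ns, 1)" "\<forall>m<ns. ts!m \<noteq> P 1 \<and> ts!m \<noteq> T 1"
      using bt_BP h by blast
    obtain C' where C': "nr < length tr" "tr ! nr = P 1" "C' 1"
      "\<forall>Q e. lock_step\<^sup>*\<^sup>* ({#(tr,e)#}+Q, IS) ({#(drop nr tr, e)#}+Q, C')"
      using run_stuck_sem[OF rr] by blast
    obtain D where D: "ns < length ts" "ts ! ns = P 1" using run_stuck_sem[OF rs(1)] by blast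
    have r: "lock_step\<^sup>*\<^sup>* ({#(ts, False), (tr, True)#}, IS) ({#(drop 0 ts, False), (drop nr tr, True)#}, C')"
      using C'(4)[rule_format, of True "{#(ts,False)#}"] by (simp add: add_mset_commute)
    have "\<not> lock_may ({#(drop 0 ts, False), (drop nr tr, True)#}, C')"
      by (rule no_success[where ns = ns]) (use C' D rs in auto)
    then show False using L2 r unfolding lock_must_def by blast
  }
  {
    assume h: "blocking_type IS ts = Some (BP 1) \<and> blocking_type IS tr = Some (BP 1)"
    obtain ns where rs: "run_stuck IS ts = Some (ns, 1)" "\<forall>m<ns. ts!m \<noteq> P 1 \<and> ts!m \<noteq> T 1"
      using bt_BP h by blast
    obtain nr where rr: "run_stuck IS tr = Some (nr, 1)" "\<forall>m<nr. tr!m \<noteq> P 1 \<and> tr!m \<noteq> T 1"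
      using bt_BP h by blast
    obtain C' where C': "ns < length ts" "ts ! ns = P 1" "C' 1"
      "\<forall>j. (\<forall>m<ns. ts!m \<noteq> P j \<and> ts!m \<noteq> T j) \<longrightarrow> C' j = IS j"
      using run_stuck_sem[OF rs(1)] by blast
    have "C' 1 = IS 1" using C'(4) rs(2) by blast
    then have IS1: "IS 1" using C'(3) by simp
    obtain D where D: "nr < length tr" "tr ! nr = P 1" using run_stuck_sem[OF rr(1)] by blast
    have "\<not> lock_may ({#(drop 0 ts, True), (drop 0 tr, False)#}, IS)"
      by (rule no_success[where ns = ns and nr = nr]) (use C' D rs rr IS1 in auto)
    then show False using L1(1) by simp
  }
qed

end
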